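(* Let $\beta\in(0,\pi/2)$ and put $\delta=\cot\beta>0$. Let $s,r\in\mathbb{R}$ with $D:=\sqrt{s^2+(\delta s-r)^2}>0$, and put $\gamma_1(s)=(2s\delta,2s,0)$, $\gamma_2(r)=(2r,0,0)\in\mathbb{R}^3$. Let $x=(x_1,x_2,x_3)$ and $y=(y_1,y_2,y_3)$ be points of $\mathbb{R}^3$ satisfying \[ \sqrt{(x_1-2s\delta)^2+(x_2-2s)^2+x_3^2}+\sqrt{(x_1-2r)^2+x_2^2+x_3^2}=\sqrt{(y_1-2s\delta)^2+(y_2-2s)^2+y_3^2}+\sqrt{(y_1-2r)^2+y_2^2+y_3^2}, \] \[ \frac{\delta(x_1-2s\delta)+(x_2-2s)}{\sqrt{(x_1-2s\delta)^2+(x_2-2s)^2+x_3^2}}=\frac{\delta(y_1-2s\delta)+(y_2-2s)}{\sqrt{(y_1-2s\delta)^2+(y_2-2s)^2+y_3^2}}, \] \[ \frac{x_1-2r}{\sqrt{(x_1-2r)^2+x_2^2+x_3^2}}=\frac{y_1-2r}{\sqrt{(y_1-2r)^2+y_2^2+y_3^2}}. \] Define $\rho\ge0$ by $\cosh\rho=\dfrac{|x-\gamma_1(s)|+|x-\gamma_2(r)|}{2D}$ (the prolate spheroidal "radial" coordinate of $x$ with respect to the foci $\gamma_1(s),\gamma_2(r)$, which are at distance $2D$ apart; by the first equation it is the same for $y$). If $\rho>\ln(5+8\delta)$, then either $x=y$ or $x=(y_1,y_2,-y_3)$.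
   Context: This is the setting of multistatic SAR with transmitters on the line $\gamma_1$ and receivers on the line $\gamma_2$, the two lines lying in the plane $x_3=0$ and meeting at angle $\beta$. The three equations express that the scene points $x$ and $y$ give the same bistatic travel distance $|\gamma_1(s)-\cdot|+|\cdot-\gamma_2(r)|$ and the same derivatives of it with respect to $s$ and $r$, i.e. they are the conditions for two points of the canonical relation of the forward scattering operator (phase $\omega(t-(|\gamma_1(s)-x|+|x-\gamma_2(r)|)/c_0)$) to project to the same point of the data cotangent space. The conclusion says the only possible artefact is the mirror image across the plane $x_3=0$. *)

theory Defs
  imports Complex_Main
begin

end

theory Submission
  imports Defs
begin

theorem mainTheorem2:
  fixes \<beta> \<delta> s r D \<rho> x1 x2 x3 y1 y2 y3 :: real
  assumes beta: "0 < \<beta>" "\<beta> < pi / 2"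
    and delta: "\<delta> = cot \<beta>"
    and Ddef: "D = sqrt (s^2 + (\<delta> * s - r)^2)"
    and Dpos: "D > 0"
    and e1: "sqrt ((x1 - 2*s*\<delta>)^2 + (x2 - 2*s)^2 + x3^2) + sqrt ((x1 - 2*r)^2 + x2^2 + x3^2)
           = sqrt ((y1 - 2*s*\<delta>)^2 + (y2 - 2*s)^2 + y3^2) + sqrt ((y1 - 2*r)^2 + y2^2 + y3^2)"
    and e2: "(\<delta> * (x1 - 2*s*\<delta>) + (x2 - 2*s)) / sqrt ((x1 - 2*s*\<delta>)^2 + (x2 - 2*s)^2 + x3^2)
           = (\<delta> * (y1 - 2*s*\<delta>) + (y2 - 2*s)) / sqrt ((y1 - 2*s*\<delta>)^2 + (y2 - 2*s)^2 + y3^2)"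
    and e3: "(x1 - 2*r) / sqrt ((x1 - 2*r)^2 + x2^2 + x3^2)
           = (y1 - 2*r) / sqrt ((y1 - 2*r)^2 + y2^2 + y3^2)"
    and rho_nonneg: "\<rho> \<ge> 0"
    and rho_def: "cosh \<rho> = (sqrt ((x1 - 2*s*\<delta>)^2 + (x2 - 2*s)^2 + x3^2)
                              + sqrt ((x1 - 2*r)^2 + x2^2 + x3^2)) / (2 * D)"
    and rho_big: "\<rho> > ln (5 + 8 * \<delta>)"
  shows "(x1, x2, x3) = (y1, y2, y3) \<or> (x1, x2, x3) = (y1, y2, - y3)"
proof -
  define A1 where "A1 = sqrt ((x1 - 2*s*\<delta>)^2 + (x2 - 2*s)^2 + x3^2)"
  define B1 where "B1 = sqrt ((x1 - 2*r)^2 + x2^2 + x3^2)"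
  define A2 where "A2 = sqrt ((y1 - 2*s*\<delta>)^2 + (y2 - 2*s)^2 + y3^2)"
  define B2 where "B2 = sqrt ((y1 - 2*r)^2 + y2^2 + y3^2)"
  define S where "S = A1 + B1"
  have dpos: "\<delta> > 0" using delta beta cot_gt_zero by simp
  have A1sq: "A1^2 = (x1 - 2*s*\<delta>)^2 + (x2 - 2*s)^2 + x3^2" unfolding A1_def by simp
  have B1sq: "B1^2 = (x1 - 2*r)^2 + x2^2 + x3^2" unfolding B1_def by simp
  have A2sq: "A2^2 = (y1 - 2*s*\<delta>)^2 + (y2 - 2*s)^2 + y3^2" unfolding A2_def by simp
  have B2sq: "B2^2 = (y1 - 2*r)^2 + y2^2 + y3^2" unfolding B2_def by simp
  have Dsq: "D^2 = s^2 + (\<delta> * s - r)^2" using Ddef by simp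
  have nn: "A1 \<ge> 0" "B1 \<ge> 0" "A2 \<ge> 0" "B2 \<ge> 0" unfolding A1_def B1_def A2_def B2_def by auto
  have S2: "S = A2 + B2" using e1 unfolding S_def A1_def B1_def A2_def B2_def by simp
  have ch: "cosh \<rho> = S / (2*D)" using rho_def unfolding S_def A1_def B1_def by simp
  have "exp \<rho> > 5 + 8*\<delta>" using rho_big dpos
    by (metis add_pos_pos exp_less_cancel_iff exp_ln mult_pos_pos zero_less_numeral)
  moreover have "exp (-\<rho>) > 0" by simp
  ultimately have "exp \<rho> + exp (-\<rho>) > 5 + 8*\<delta>" by linarith
  hence "cosh \<rho> > (5 + 8*\<delta>)/2" unfolding cosh_field_def by (simp add: divide_strict_right_mono)
  hence Sbig: "S > D * (5 + 8*\<delta>)" using ch Dpos by (simp add: field_simps)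
  have dD: "\<delta>*D > 0" using dpos Dpos by simp
  have Sbig': "S > 5*D + 8*(\<delta>*D)" using Sbig by (simp add: algebra_simps)
  have "S > 2*D" using Sbig' dD Dpos by linarith
  have sD: "\<bar>s\<bar> \<le> D" using Ddef by (simp add: real_le_rsqrt)
  have "\<bar>\<delta>*s - r\<bar> \<le> D" using Ddef by (simp add: real_le_rsqrt)
  moreover have "\<bar>\<delta>*s\<bar> \<le> \<delta> * D" using sD dpos by (simp add: abs_mult mult_left_mono)
  ultimately have rD: "\<bar>r\<bar> \<le> D + \<delta> * D" by linarith
  have A1pos: "A1 > 0"
  proof (rule ccontr)
    assume "\<not> A1 > 0" hence "A1 = 0" using nn by simp
    hence "x1 = 2*s*\<delta>" "x2 = 2*s" "x3 = 0" using A1sq by (auto simp: add_nonneg_eq_0_iff)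
    hence "B1^2 = (2*D)^2" using B1sq Dsq by (simp add: power2_eq_square algebra_simps)
    hence "B1 = 2*D" by (rule power2_eq_imp_eq) (use nn Dpos in auto)
    thus False using \<open>S > 2*D\<close> \<open>A1 = 0\<close> S_def by simp
  qed
  have B1pos: "B1 > 0"
  proof (rule ccontr)
    assume "\<not> B1 > 0" hence "B1 = 0" using nn by simp
    hence "x1 = 2*r" "x2 = 0" "x3 = 0" using B1sq by (auto simp: add_nonneg_eq_0_iff)
    hence "A1^2 = (2*D)^2" using A1sq Dsq by (simp add: power2_eq_square algebra_simps)
    hence "A1 = 2*D" by (rule power2_eq_imp_eq) (use nn Dpos in auto)
    thus False using \<open>S > 2*D\<close> \<open>B1 = 0\<close> S_def by simp
  qed
  have A2pos: "A2 > 0"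
  proof (rule ccontr)
    assume "\<not> A2 > 0" hence "A2 = 0" using nn by simp
    hence "y1 = 2*s*\<delta>" "y2 = 2*s" "y3 = 0" using A2sq by (auto simp: add_nonneg_eq_0_iff)
    hence "B2^2 = (2*D)^2" using B2sq Dsq by (simp add: power2_eq_square algebra_simps)
    hence "B2 = 2*D" by (rule power2_eq_imp_eq) (use nn Dpos in auto)
    thus False using \<open>S > 2*D\<close> \<open>A2 = 0\<close> S2 by simp
  qed
  have B2pos: "B2 > 0"
  proof (rule ccontr)
    assume "\<not> B2 > 0" hence "B2 = 0" using nn by simp
    hence "y1 = 2*r" "y2 = 0" "y3 = 0" using B2sq by (auto simp: add_nonneg_eq_0_iff)
    hence "A2^2 = (2*D)^2" using A2sq Dsq by (simp add: power2_eq_square algebra_simps)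
    hence "A2 = 2*D" by (rule power2_eq_imp_eq) (use nn Dpos in auto)
    thus False using \<open>S > 2*D\<close> \<open>B2 = 0\<close> S2 by simp
  qed
  define c1 where "c1 = (\<delta> * (x1 - 2*s*\<delta>) + (x2 - 2*s)) / A1"
  define c2 where "c2 = (x1 - 2*r) / B1"
  have hx1: "\<delta> * (x1 - 2*s*\<delta>) + (x2 - 2*s) = c1 * A1" using A1pos unfolding c1_def by simp
  have hy1: "\<delta> * (y1 - 2*s*\<delta>) + (y2 - 2*s) = c1 * A2"
    using A2pos e2 unfolding c1_def A1_def A2_def by (simp add: field_simps)
  have hx2: "x1 = 2*r + c2 * B1" using B1pos unfolding c2_def by simp
  have hy2: "y1 = 2*r + c2 * B2"
    using B2pos e3 unfolding c2_def B1_def B2_def by (simp add: field_simps)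
  have c2b: "\<bar>c2\<bar> \<le> 1"
  proof -
    have "\<bar>x1 - 2*r\<bar> = sqrt ((x1 - 2*r)^2)" by simp
    also have "\<dots> \<le> B1" unfolding B1_def by (rule real_sqrt_le_mono) simp
    finally have a: "\<bar>x1 - 2*r\<bar> \<le> B1" .
    have "\<bar>c2\<bar> = \<bar>x1 - 2*r\<bar> / B1" unfolding c2_def using B1pos by simp
    also have "\<dots> \<le> 1" using a B1pos by simp
    finally show ?thesis .
  qed
  have c1b: "\<bar>c1\<bar> \<le> 1 + \<delta>"
  proof -
    have "\<bar>x1 - 2*s*\<delta>\<bar> = sqrt ((x1 - 2*s*\<delta>)^2)" by simp
    also have "\<dots> \<le> A1" unfolding A1_def by (rule real_sqrt_le_mono) simp
    finally have u: "\<bar>x1 - 2*s*\<delta>\<bar> \<le> A1" .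
    have "\<bar>x2 - 2*s\<bar> = sqrt ((x2 - 2*s)^2)" by simp
    also have "\<dots> \<le> A1" unfolding A1_def by (rule real_sqrt_le_mono) simp
    finally have v: "\<bar>x2 - 2*s\<bar> \<le> A1" .
    have "\<bar>\<delta> * (x1 - 2*s*\<delta>) + (x2 - 2*s)\<bar> \<le> \<delta> * A1 + A1"
    proof -
      have "\<bar>\<delta> * (x1 - 2*s*\<delta>)\<bar> \<le> \<delta> * A1" using u dpos by (simp add: abs_mult mult_left_mono)
      thus ?thesis using v by linarith
    qed
    hence "\<bar>c1 * A1\<bar> \<le> (1 + \<delta>) * A1" using hx1 by (simp add: algebra_simps)
    thus ?thesis using A1pos by (simp add: abs_mult)
  qed
  have Ex: "A1^2 - B1^2 = S^2 - 2*S*B1" using S_def by (simp add: power2_eq_square algebra_simps)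
  have Ey: "A2^2 - B2^2 = S^2 - 2*S*B2" using S2 by (simp add: power2_eq_square algebra_simps)
  have LA: "S^2 - 2*S*B1 = (4*r - 4*s*\<delta>)*x1 - 4*s*x2 + 4*s^2*\<delta>^2 + 4*s^2 - 4*r^2"
    using Ex A1sq B1sq by (simp add: power2_eq_square algebra_simps)
  have LB: "S^2 - 2*S*B2 = (4*r - 4*s*\<delta>)*y1 - 4*s*y2 + 4*s^2*\<delta>^2 + 4*s^2 - 4*r^2"
    using Ey A2sq B2sq by (simp add: power2_eq_square algebra_simps)
  have HA: "A1 = S - B1" "A2 = S - B2" using S_def S2 by auto
  have "\<bar>4*s*c1 + 4*r*c2\<bar> \<le> 4*D*(1+\<delta>) + 4*(D + \<delta>*D)"
  proof -
    have "\<bar>s*c1\<bar> \<le> D*(1+\<delta>)" using sD c1b dpos by (simp add: abs_mult mult_mono)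
    moreover have "\<bar>r*c2\<bar> \<le> (D + \<delta>*D) * 1"
    proof -
      have "\<bar>r\<bar>*\<bar>c2\<bar> \<le> \<bar>r\<bar>*1" using c2b by (intro mult_left_mono) simp_all
      thus ?thesis using rD by (simp add: abs_mult)
    qed
    ultimately show ?thesis by simp
  qed
  hence "\<bar>4*s*c1 + 4*r*c2\<bar> \<le> 8*D + 8*(\<delta>*D)" by (simp add: algebra_simps)
  hence det: "2*S + 4*s*c1 + 4*r*c2 \<noteq> 0" using Sbig' dD Dpos by linarith
  define \<Delta> where "\<Delta> = B2 - B1"
  define \<eta> where "\<eta> = y2 - x2"
  have q1: "-2*S*\<Delta> = (4*r - 4*s*\<delta>)*c2*\<Delta> - 4*s*\<eta>"
    using LA LB hx2 hy2 unfolding \<Delta>_def \<eta>_def by (simp add: algebra_simps)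
  have q2: "\<delta>*c2*\<Delta> + \<eta> = -c1*\<Delta>"
    using hx1 hy1 hx2 hy2 HA unfolding \<Delta>_def \<eta>_def by (simp add: algebra_simps)
  have "\<Delta> * (2*S + 4*s*c1 + 4*r*c2) = 0"
    using q1 q2 by algebra
  hence "\<Delta> = 0" using det by simp
  hence eB: "B2 = B1" and e2': "y2 = x2" using q2 unfolding \<Delta>_def \<eta>_def by auto
  have e1': "y1 = x1" using hx2 hy2 eB by simp
  have "y3^2 = x3^2" using B1sq B2sq eB e1' e2' by simp
  hence "x3 = y3 \<or> x3 = - y3" by (metis power2_eq_iff)
  thus ?thesis using e1' e2' by auto
qed

end
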